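(* Let $N\ge1$, $\mathsf{C}(x)=\tfrac12\log(1+x)$, and for non-negative SNRs $\mathbf{S}=(\mathsf{SNR}_{s,r},\mathsf{SNR}_{s,1},\dots,\mathsf{SNR}_{s,N},\mathsf{SNR}_{r,1},\dots,\mathsf{SNR}_{r,N})$ define $$h_j(\mathbf{S})=\mathsf{SNR}_{s,j}+\frac{\mathsf{SNR}_{r,j}\,\mathsf{SNR}_{s,r}}{\mathsf{SNR}_{s,j}+\mathsf{SNR}_{r,j}+\mathsf{SNR}_{s,r}+1},\qquad \widetilde R_{QF}(\mathbf{S})=\min_{1\le j\le N}\mathsf{C}(h_j(\mathbf{S})).$$ If $\mathsf{SNR}_{s,1},\dots,\mathsf{SNR}_{s,N}\ge0$ are held fixed, then $\widetilde R_{QF}$ is quasi-concave as a function of the remaining SNRs $(\mathsf{SNR}_{s,r},\mathsf{SNR}_{r,1},\dots,\mathsf{SNR}_{r,N})\in[0,\infty)^{N+1}$.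
   Context: $\widetilde R_{QF}$ is a quantize-forward achievable rate (Gaussian inputs, optimized quantization noise) for a real AWGN multicast relay channel with source $s$, relay $r$, destinations $1,\dots,N$ and link SNRs $\mathsf{SNR}_{u,v}\ge0$. A function $F$ on a convex set is quasi-concave if $F(\lambda x_1+(1-\lambda)x_2)\ge\min(F(x_1),F(x_2))$ for all $x_1,x_2$ and $\lambda\in[0,1]$. *)

theory Defs
  imports "HOL-Analysis.Analysis"
begin

definition Cap :: "real \<Rightarrow> real" where
  "Cap x = (1/2) * ln (1 + x)"

text \<open>h_j with fixed source-destination SNRs ssd, source-relay SNR ssr, relay-destination SNRs srd\<close>
definition h_QF :: "(nat \<Rightarrow> real) \<Rightarrow> real \<Rightarrow> (nat \<Rightarrow> real) \<Rightarrow> nat \<Rightarrow> real" where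
  "h_QF ssd ssr srd j = ssd j + (srd j * ssr) / (ssd j + srd j + ssr + 1)"

definition R_QF :: "nat \<Rightarrow> (nat \<Rightarrow> real) \<Rightarrow> real \<Rightarrow> (nat \<Rightarrow> real) \<Rightarrow> real" where
  "R_QF N ssd ssr srd = (MIN j\<in>{1..N}. Cap (h_QF ssd ssr srd j))"

text \<open>Domain [0,\<infinity>)^(N+1) of (SNR_{s,r}, SNR_{r,1..N}); relay SNRs are indexed by 1..N
  and set to 0 outside that range (a canonical representative).\<close>
definition QF_dom :: "nat \<Rightarrow> (real \<times> (nat \<Rightarrow> real)) set" where
  "QF_dom N = {(ssr, srd). ssr \<ge> 0 \<and> (\<forall>j\<in>{1..N}. srd j \<ge> 0) \<and> (\<forall>j. j \<notin> {1..N} \<longrightarrow> srd j = 0)}"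

definition cvx_comb :: "real \<Rightarrow> real \<times> (nat \<Rightarrow> real) \<Rightarrow> real \<times> (nat \<Rightarrow> real) \<Rightarrow> real \<times> (nat \<Rightarrow> real)" where
  "cvx_comb t x y = (t * fst x + (1 - t) * fst y, \<lambda>j. t * snd x j + (1 - t) * snd y j)"

definition quasi_concave_on :: "(real \<times> (nat \<Rightarrow> real)) set \<Rightarrow> (real \<times> (nat \<Rightarrow> real) \<Rightarrow> real) \<Rightarrow> bool" where
  "quasi_concave_on S F \<longleftrightarrow>
     (\<forall>x1\<in>S. \<forall>x2\<in>S. \<forall>t::real. 0 \<le> t \<and> t \<le> 1 \<longrightarrow>
        F (cvx_comb t x1 x2) \<ge> min (F x1) (F x2))"

end

theory Submission
  imports Defs
begin

lemma cross_ge: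
  fixes pA qA pB qB K :: real
  assumes "pA \<ge> 0" "qA \<ge> 0" "pB \<ge> 0" "qB \<ge> 0" "K \<ge> 0"
    "pA * qA \<ge> K" "pB * qB \<ge> K"
  shows "pA * qB + pB * qA \<ge> 2 * K"
proof -
  have p: "(pA * qB) * (pB * qA) \<ge> K * K"
  proof -
    have "(pA * qB) * (pB * qA) = (pA * qA) * (pB * qB)" by (simp add: ac_simps)
    also have "\<dots> \<ge> K * K" using assms by (intro mult_mono) auto
    finally show ?thesis .
  qed
  have sq: "(pA * qB + pB * qA)^2 - 4 * ((pA * qB) * (pB * qA)) = (pA * qB - pB * qA)^2"
    by algebra
  have "(pA * qB + pB * qA)^2 \<ge> 4 * ((pA * qB) * (pB * qA))"
    using sq zero_le_power2[of "pA * qB - pB * qA"] by linarith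
  moreover have "(2 * K)^2 = 4 * (K * K)" by (simp add: power2_eq_square)
  ultimately have "(2 * K)^2 \<le> (pA * qB + pB * qA)^2" using p by linarith
  moreover have "pA * qB + pB * qA \<ge> 0" using assms by simp
  ultimately show ?thesis by (rule power2_le_imp_le)
qed

lemma gt_lem:
  fixes x y b c :: real
  assumes "b \<ge> 1" "c > 0" "x \<ge> 0" "y \<ge> 0" "x*y \<ge> c*(x+y+b)"
  shows "x > c \<and> y > c"
proof -
  have cp1: "c*(x+b) > 0" using assms by simp
  have cp2: "c*(y+b) > 0" using assms by simp
  have E1a: "c*(x+y+b) = c*y + c*(x+b)" by (simp add: algebra_simps)
  have E1b: "c*(x+y+b) = x*c + c*(y+b)" by (simp add: algebra_simps)
  have l1: "x*y > c*y" using assms(5) cp1 E1a by linarith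
  have l2: "x*y > x*c" using assms(5) cp2 E1b by linarith
  have "c*y \<ge> 0" using assms by simp
  hence "x*y > 0" using l1 by linarith
  hence "x > 0" "y > 0" using assms by (auto simp: zero_less_mult_iff)
  have "x > c" using l1 \<open>y>0\<close> by simp
  moreover have "y > c" using l2 \<open>x>0\<close> by simp
  ultimately show ?thesis by simp
qed
lemma key:
  fixes b x1 y1 x2 y2 t c :: real
  assumes "b \<ge> 1" "x1 \<ge> 0" "y1 \<ge> 0" "x2 \<ge> 0" "y2 \<ge> 0" "0 \<le> t" "t \<le> 1" "c > 0"
    "x1 * y1 \<ge> c * (x1 + y1 + b)" "x2 * y2 \<ge> c * (x2 + y2 + b)"
  shows "(t*x1+(1-t)*x2) * (t*y1+(1-t)*y2) \<ge> c * ((t*x1+(1-t)*x2) + (t*y1+(1-t)*y2) + b)"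
proof -
  define K where "K = c*c + c*b"
  have K0: "K \<ge> 0" using assms unfolding K_def by simp
  have g1: "x1 > c" "y1 > c" using gt_lem[of b c x1 y1] assms by auto
  have g2: "x2 > c" "y2 > c" using gt_lem[of b c x2 y2] assms by auto
  have e1: "(x1-c)*(y1-c) \<ge> K" using assms(9) unfolding K_def by (simp add: algebra_simps)
  have e2: "(x2-c)*(y2-c) \<ge> K" using assms(10) unfolding K_def by (simp add: algebra_simps)
  have cr: "(x1-c)*(y2-c) + (x2-c)*(y1-c) \<ge> 2*K"
    by (rule cross_ge) (use g1 g2 e1 e2 K0 in auto)
  define s where "s = 1 - t"
  have s0: "s \<ge> 0" "t + s = 1" using assms unfolding s_def by auto
  have "(t * (x1-c)+s * (x2-c)) * (t * (y1-c)+s * (y2-c))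
      = t * t * ((x1-c) * (y1-c)) + s * s * ((x2-c) * (y2-c)) + t * s * ((x1-c) * (y2-c) + (x2-c) * (y1-c))"
    by (simp add: algebra_simps)
  also have "\<dots> \<ge> t * t * K + s * s * K + t * s * (2 * K)"
    using e1 e2 cr s0 assms(6)
    by (intro add_mono mult_left_mono) auto
  finally have A: "(t * (x1-c)+s * (x2-c)) * (t * (y1-c)+s * (y2-c)) \<ge> (t+s) * (t+s) * K"
    by (simp add: algebra_simps)
  have "t * (x1-c)+s * (x2-c) = (t * x1+s * x2) - c" "t * (y1-c)+s * (y2-c) = (t * y1+s * y2) - c"
    unfolding s_def by (simp_all add: algebra_simps)
  with A s0 have "((t * x1+s * x2) - c) * ((t * y1+s * y2) - c) \<ge> K" by simp
  thus ?thesis unfolding s_def K_def by (simp add: algebra_simps)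
qed

lemma g_qc:
  fixes b x1 y1 x2 y2 t :: real
  assumes "b \<ge> 1" "x1 \<ge> 0" "y1 \<ge> 0" "x2 \<ge> 0" "y2 \<ge> 0" "0 \<le> t" "t \<le> 1"
  shows "(t*x1+(1-t)*x2) * (t*y1+(1-t)*y2) / ((t*x1+(1-t)*x2) + (t*y1+(1-t)*y2) + b)
     \<ge> min (x1*y1/(x1+y1+b)) (x2*y2/(x2+y2+b))" (is "?g \<ge> ?c")
proof -
  have xz: "t*x1+(1-t)*x2 \<ge> 0" "t*y1+(1-t)*y2 \<ge> 0" using assms by simp_all
  show ?thesis
  proof (cases "?c > 0")
    case False
    have "?g \<ge> 0" using xz assms by simp
    thus ?thesis using False by linarith
  next
    case True
    have d1: "x1+y1+b > 0" "x2+y2+b > 0" using assms by auto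
    have "x1*y1 \<ge> ?c*(x1+y1+b)"
    proof -
      have "?c*(x1+y1+b) \<le> (x1*y1/(x1+y1+b))*(x1+y1+b)" using d1 by (intro mult_right_mono) auto
      also have "\<dots> = x1*y1" using d1 by simp
      finally show ?thesis .
    qed
    moreover have "x2*y2 \<ge> ?c*(x2+y2+b)"
    proof -
      have "?c*(x2+y2+b) \<le> (x2*y2/(x2+y2+b))*(x2+y2+b)" using d1 by (intro mult_right_mono) auto
      also have "\<dots> = x2*y2" using d1 by simp
      finally show ?thesis .
    qed
    ultimately have "(t*x1+(1-t)*x2) * (t*y1+(1-t)*y2) \<ge> ?c * ((t*x1+(1-t)*x2) + (t*y1+(1-t)*y2) + b)"
      using key[OF assms True] by simp
    moreover have "(t*x1+(1-t)*x2) + (t*y1+(1-t)*y2) + b > 0" using xz assms(1) by linarith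
    ultimately show ?thesis by (simp add: pos_le_divide_eq)
  qed
qed

lemma min_shift:
  fixes s g u v :: real
  assumes "g \<ge> min u v"
  shows "s + g \<ge> min (s + u) (s + v)"
  using assms by (auto simp: min_def)

theorem theorem3:
  fixes N :: nat and ssd :: "nat \<Rightarrow> real"
  assumes "N \<ge> 1"
    and "\<forall>j\<in>{1..N}. ssd j \<ge> 0"
  shows "quasi_concave_on (QF_dom N) (\<lambda>(ssr, srd). R_QF N ssd ssr srd)"
  unfolding quasi_concave_on_def
proof (intro ballI allI impI)
  fix p1 p2 and t :: real
  assume p1: "p1 \<in> QF_dom N" and p2: "p2 \<in> QF_dom N" and t: "0 \<le> t \<and> t \<le> 1"
  obtain a1 f1 where e1: "p1 = (a1, f1)" by (cases p1)
  obtain a2 f2 where e2: "p2 = (a2, f2)" by (cases p2)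
  have ne: "{1..N} \<noteq> {}" using assms(1) by simp
  have hmono: "Cap (h_QF ssd (t*a1+(1-t)*a2) (\<lambda>j. t*f1 j+(1-t)*f2 j) j)
      \<ge> min (Cap (h_QF ssd a1 f1 j)) (Cap (h_QF ssd a2 f2 j))" if j: "j \<in> {1..N}" for j
  proof -
    have q: "a1 \<ge> 0" "a2 \<ge> 0" "f1 j \<ge> 0" "f2 j \<ge> 0"
      using p1 p2 j e1 e2 unfolding QF_dom_def by auto
    have s: "ssd j \<ge> 0" using assms(2) j by auto
    have G: "(t*f1 j+(1-t)*f2 j) * (t*a1+(1-t)*a2) / ((t*f1 j+(1-t)*f2 j) + (t*a1+(1-t)*a2) + (ssd j + 1))
     \<ge> min (f1 j*a1/(f1 j+a1+(ssd j + 1))) (f2 j*a2/(f2 j+a2+(ssd j + 1)))"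
      by (rule g_qc) (use q s t in auto)
    have nn: "h_QF ssd a f j \<ge> 0" if "a \<ge> 0" "f j \<ge> 0" for a f
      using that s unfolding h_QF_def by simp
    have cm: "Cap u \<le> Cap v" if "0 \<le> u" "u \<le> v" for u v
      using that unfolding Cap_def by simp
    have H: "h_QF ssd (t*a1+(1-t)*a2) (\<lambda>j. t*f1 j+(1-t)*f2 j) j
      \<ge> min (h_QF ssd a1 f1 j) (h_QF ssd a2 f2 j)"
    proof -
      have hr: "h_QF ssd a f j = ssd j + f j * a / (f j + a + (ssd j + 1))" for a f
        unfolding h_QF_def by (simp add: add_ac)
      show ?thesis unfolding hr using G by (intro min_shift) simp
    qed
    have "h_QF ssd a1 f1 j \<ge> 0" "h_QF ssd a2 f2 j \<ge> 0" using nn q by auto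
    then show ?thesis
    proof (cases "h_QF ssd a1 f1 j \<le> h_QF ssd a2 f2 j")
      case True
      then have "Cap (h_QF ssd a1 f1 j) \<le> Cap (h_QF ssd (t*a1+(1-t)*a2) (\<lambda>j. t*f1 j+(1-t)*f2 j) j)"
        using H \<open>h_QF ssd a1 f1 j \<ge> 0\<close> by (intro cm) auto
      then show ?thesis by linarith
    next
      case False
      then have "Cap (h_QF ssd a2 f2 j) \<le> Cap (h_QF ssd (t*a1+(1-t)*a2) (\<lambda>j. t*f1 j+(1-t)*f2 j) j)"
        using H \<open>h_QF ssd a2 f2 j \<ge> 0\<close> by (intro cm) auto
      then show ?thesis by linarith
    qed
  qed
  have R: "R_QF N ssd (t*a1+(1-t)*a2) (\<lambda>j. t*f1 j+(1-t)*f2 j) \<ge> min (R_QF N ssd a1 f1) (R_QF N ssd a2 f2)"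
    unfolding R_QF_def
  proof (rule Min.boundedI)
    show "finite ((\<lambda>j. Cap (h_QF ssd (t*a1+(1-t)*a2) (\<lambda>j. t*f1 j+(1-t)*f2 j) j)) ` {1..N})" by simp
    show "(\<lambda>j. Cap (h_QF ssd (t*a1+(1-t)*a2) (\<lambda>j. t*f1 j+(1-t)*f2 j) j)) ` {1..N} \<noteq> {}" using ne by simp
  next
    fix y assume "y \<in> (\<lambda>j. Cap (h_QF ssd (t*a1+(1-t)*a2) (\<lambda>j. t*f1 j+(1-t)*f2 j) j)) ` {1..N}"
    then obtain j where j: "j \<in> {1..N}" and y: "y = Cap (h_QF ssd (t*a1+(1-t)*a2) (\<lambda>j. t*f1 j+(1-t)*f2 j) j)" by auto
    have "(MIN j\<in>{1..N}. Cap (h_QF ssd a1 f1 j)) \<le> Cap (h_QF ssd a1 f1 j)" using j by simp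
    moreover have "(MIN j\<in>{1..N}. Cap (h_QF ssd a2 f2 j)) \<le> Cap (h_QF ssd a2 f2 j)" using j by simp
    ultimately show "min (MIN j\<in>{1..N}. Cap (h_QF ssd a1 f1 j)) (MIN j\<in>{1..N}. Cap (h_QF ssd a2 f2 j)) \<le> y"
      using hmono[OF j] y by linarith
  qed
  show "min ((\<lambda>(ssr, srd). R_QF N ssd ssr srd) p1) ((\<lambda>(ssr, srd). R_QF N ssd ssr srd) p2)
      \<le> (\<lambda>(ssr, srd). R_QF N ssd ssr srd) (cvx_comb t p1 p2)"
    unfolding e1 e2 cvx_comb_def fst_conv snd_conv prod.case using R .
qed

end
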